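(* Let $x\in\mathbb{R}\setminus D$. Then $$d_-T(x)\le \liminf_{n\to\infty} G_n'(x)+1\qquad\text{and}\qquad D^+T(x)\ge \limsup_{n\to\infty} G_n'(x)-1 .$$
   Context: Let $\phi(x)=\operatorname{dist}(x,\mathbb{Z})$ and let $T:\mathbb{R}\to\mathbb{R}$ be the Takagi function $T(x)=\sum_{n=0}^\infty 2^{-n}\phi(2^nx)$. For $n\ge1$ let $D_n=\{k/2^{n-1}:k\in\mathbb{Z}\}$ and let $D=\bigcup_n D_n$ be the set of dyadic rationals. Let $g_k(x)=\operatorname{dist}(x,D_k)$ and $G_n=g_1+\dots+g_n$, so that $T=\sum_{k\ge1}g_k=\lim_n G_n$ pointwise. For $x\notin D$ each $g_k$ is differentiable at $x$ with $g_k'(x)\in\{-1,1\}$, so $G_n'(x)$ is a well-defined integer. For $f:\mathbb{R}\to\mathbb{R}$ the Dini derivatives are $d_-f(x)=\liminf_{h\uparrow0}\frac{f(x+h)-f(x)}{h}$ and $D^+f(x)=\limsup_{h\downarrow0}\frac{f(x+h)-f(x)}{h}$. *)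

theory Defs
  imports "HOL-Analysis.Analysis"
begin

definition phi :: "real \<Rightarrow> real" where
  "phi x = infdist x (range real_of_int)"

definition takagi :: "real \<Rightarrow> real" where
  "takagi x = (\<Sum>n. phi (2 ^ n * x) / 2 ^ n)"

definition dyad_level :: "nat \<Rightarrow> real set" where
  "dyad_level n = {real_of_int k / 2 ^ (n - 1) | k. True}"

definition dyadics :: "real set" where
  "dyadics = (\<Union>n\<in>{1..}. dyad_level n)"

definition gk :: "nat \<Rightarrow> real \<Rightarrow> real" where
  "gk k x = infdist x (dyad_level k)"

definition Gn :: "nat \<Rightarrow> real \<Rightarrow> real" where
  "Gn n x = (\<Sum>k=1..n. gk k x)"

definition dini_lower_left :: "(real \<Rightarrow> real) \<Rightarrow> real \<Rightarrow> ereal" where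
  "dini_lower_left f x = Liminf (at_left 0) (\<lambda>h. ereal ((f (x + h) - f x) / h))"

definition dini_upper_right :: "(real \<Rightarrow> real) \<Rightarrow> real \<Rightarrow> ereal" where
  "dini_upper_right f x = Limsup (at_right 0) (\<lambda>h. ereal ((f (x + h) - f x) / h))"

end

theory Submission imports Defs begin

definition psi :: "real \<Rightarrow> real" where
  "psi t = min (t - of_int \<lfloor>t\<rfloor>) (of_int \<lfloor>t\<rfloor> + 1 - t)"

lemma psi_le_dist: "psi t \<le> \<bar>t - of_int k\<bar>"
proof (cases "k \<le> \<lfloor>t\<rfloor>")
  case True
  then have "real_of_int k \<le> of_int \<lfloor>t\<rfloor>" by simp
  then show ?thesis unfolding psi_def by linarith
next
  case False
  then have "real_of_int k \<ge> of_int \<lfloor>t\<rfloor> + 1" by linarith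
  then show ?thesis unfolding psi_def by linarith
qed

lemma infdist_scaled:
  assumes c: "c > 0"
  shows "infdist x {real_of_int k / c | k. True} = psi (c * x) / c"
proof (rule antisym)
  let ?A = "{real_of_int k / c | k. True}"
  have d: "dist x (real_of_int k / c) = \<bar>c * x - of_int k\<bar> / c" for k
  proof -
    have "dist x (real_of_int k / c) = \<bar>x - of_int k / c\<bar>" by (simp add: dist_real_def)
    also have "x - of_int k / c = (c * x - of_int k) / c" using c by (simp add: field_simps)
    finally show ?thesis using c by simp
  qed
  have m1: "real_of_int \<lfloor>c*x\<rfloor> / c \<in> ?A" by blast
  have m2: "real_of_int (\<lfloor>c*x\<rfloor>+1) / c \<in> ?A" by blast
  have "infdist x ?A \<le> \<bar>c * x - of_int \<lfloor>c*x\<rfloor>\<bar> / c" using infdist_le[OF m1] d by metis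
  moreover have "infdist x ?A \<le> \<bar>c * x - of_int (\<lfloor>c*x\<rfloor>+1)\<bar> / c" using infdist_le[OF m2] d by metis
  ultimately have "infdist x ?A \<le> min (\<bar>c * x - of_int \<lfloor>c*x\<rfloor>\<bar>) (\<bar>c * x - of_int (\<lfloor>c*x\<rfloor>+1)\<bar>) / c"
    using c by (simp add: min_def)
  moreover have "min (\<bar>c * x - of_int \<lfloor>c*x\<rfloor>\<bar>) (\<bar>c * x - of_int (\<lfloor>c*x\<rfloor>+1)\<bar>) = psi (c*x)"
    unfolding psi_def by (smt (verit) floor_correct of_int_add of_int_1)
  ultimately show "infdist x ?A \<le> psi (c * x) / c" by simp
  have ne: "?A \<noteq> {}" by blast
  show "psi (c * x) / c \<le> infdist x ?A"
    unfolding infdist_def using ne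
  proof (simp only: if_False, intro cINF_greatest)
    fix a assume "a \<in> ?A"
    then obtain k where "a = real_of_int k / c" by blast
    then show "psi (c * x) / c \<le> dist x a" using d psi_le_dist c
      by (simp add: divide_right_mono)
  qed (use ne in auto)
qed

lemma phi_psi: "phi t = psi t"
  using infdist_scaled[of 1 t] unfolding phi_def
  by (simp add: Setcompr_eq_image image_def)

lemma gk_psi: "gk k x = psi (2^(k-1) * x) / 2^(k-1)"
  unfolding gk_def dyad_level_def by (rule infdist_scaled) simp

lemma psi_refl:
  assumes "m \<in> \<int>" shows "psi (m - t) = psi t"
proof -
  obtain j where m: "m = of_int j" using assms Ints_cases by blast
  show ?thesis
  proof (cases "t \<in> \<int>")
    case True
    then obtain i where "t = of_int i" using Ints_cases by blast
    then show ?thesis unfolding psi_def m by simp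
  next
    case False
    then have lt: "of_int \<lfloor>t\<rfloor> < t" by (metis Ints_of_int floor_correct order_le_less)
    have "\<lfloor>m - t\<rfloor> = j - \<lfloor>t\<rfloor> - 1" unfolding m
      using lt by (subst floor_eq_iff) (simp, linarith)
    then show ?thesis unfolding psi_def m by (simp add: min.commute)
  qed
qed

definition sgn_par :: "int \<Rightarrow> real" where
  "sgn_par J = (if even J then 1 else -1)"

lemma psi_affine:
  assumes "of_int J \<le> 2 * t1" "2 * t1 \<le> of_int J + 1"
          "of_int J \<le> 2 * t2" "2 * t2 \<le> of_int J + 1"
  shows "psi t2 - psi t1 = sgn_par J * (t2 - t1)"
proof -
  have key: "psi t = (if even J then t - of_int J / 2 else (of_int J + 1)/2 - t)"
    if "of_int J \<le> 2 * t" "2 * t \<le> of_int J + 1" for t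
  proof (cases "even J")
    case True
    then obtain i where J: "J = 2 * i" by blast
    have "\<lfloor>t\<rfloor> = i" using that J by (subst floor_eq_iff) simp
    then show ?thesis using that J True unfolding psi_def by simp
  next
    case False
    then obtain i where J: "J = 2 * i + 1" using oddE by blast
    show ?thesis
    proof (cases "t = of_int i + 1")
      case True
      then have "\<lfloor>t\<rfloor> = i + 1" by simp
      then show ?thesis using True J False unfolding psi_def by simp
    next
      case ne: False
      have "\<lfloor>t\<rfloor> = i" using that J ne by (subst floor_eq_iff) simp
      then show ?thesis using that J False unfolding psi_def by simp
    qed
  qed
  show ?thesis using key[OF assms(1,2)] key[OF assms(3,4)] unfolding sgn_par_def
    by (simp add: algebra_simps)
qed


definition pk :: "nat \<Rightarrow> real \<Rightarrow> real" where
  "pk k z = psi (2^k * z) / 2^k"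

definition sk :: "nat \<Rightarrow> real \<Rightarrow> real" where
  "sk k z = sgn_par \<lfloor>2^(Suc k) * z\<rfloor>"

lemma pk_affine:
  assumes "of_int J \<le> 2^(Suc k) * t1" "2^(Suc k) * t1 \<le> of_int J + 1"
          "of_int J \<le> 2^(Suc k) * t2" "2^(Suc k) * t2 \<le> of_int J + 1"
  shows "pk k t2 - pk k t1 = sgn_par J * (t2 - t1)"
proof -
  have "psi (2^k * t2) - psi (2^k * t1) = sgn_par J * (2^k * t2 - 2^k * t1)"
    by (rule psi_affine) (use assms in \<open>simp_all add: mult.assoc\<close>)
  moreover have "pk k t2 - pk k t1 = (psi (2^k * t2) - psi (2^k * t1)) / 2^k"
    unfolding pk_def by (simp add: diff_divide_distrib)
  ultimately show ?thesis by (simp add: right_diff_distrib[symmetric])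
qed

lemma nondyadic:
  assumes "x \<notin> dyadics" shows "2^m * x \<notin> \<int>"
proof
  assume "2^m * x \<in> \<int>"
  then obtain k where k: "2^m * x = of_int k" using Ints_cases by blast
  then have "x = of_int k / 2^(Suc m - 1)" by (simp add: field_simps)
  then have "x \<in> dyad_level (Suc m)" unfolding dyad_level_def by blast
  then show False using assms unfolding dyadics_def by auto
qed

lemma pk_deriv:
  assumes "2^(Suc k) * x \<notin> \<int>"
  shows "(pk k has_field_derivative sk k x) (at x)"
proof -
  define J where "J = \<lfloor>2^(Suc k) * x\<rfloor>"
  define c :: real where "c = 2^(Suc k)"
  have c: "c > 0" unfolding c_def by simp
  have J1: "of_int J < c * x" unfolding J_def c_def using assms
    by (metis Ints_of_int floor_correct order_le_less)
  have J2: "c * x < of_int J + 1" unfolding J_def c_def by linarith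
  define S where "S = {of_int J / c <..< (of_int J + 1) / c}"
  have "open S" unfolding S_def by simp
  have xS: "x \<in> S" unfolding S_def using J1 J2 c by (simp add: field_simps)
  have eq: "pk k x + sgn_par J * (z - x) = pk k z" if "z \<in> S" for z
  proof -
    have "of_int J < c * z" "c * z < of_int J + 1" using that c unfolding S_def
      by (simp_all add: field_simps)
    then have "pk k z - pk k x = sgn_par J * (z - x)"
      using J1 J2 by (intro pk_affine) (simp_all add: c_def)
    then show ?thesis by simp
  qed
  have "((\<lambda>z. pk k x + sgn_par J * (z - x)) has_field_derivative sgn_par J) (at x)"
    by (auto intro!: derivative_eq_intros)
  from has_field_derivative_transform_within_open[OF this \<open>open S\<close> xS eq]
  show ?thesis unfolding sk_def J_def .
qed

lemma Gn_pk: "Gn n z = (\<Sum>k<n. pk k z)"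
proof (induction n)
  case 0 then show ?case by (simp add: Gn_def)
next
  case (Suc n)
  have "Gn (Suc n) z = Gn n z + gk (Suc n) z" unfolding Gn_def by simp
  then show ?case using Suc by (simp add: gk_psi pk_def)
qed

lemma deriv_Gn:
  assumes "x \<notin> dyadics"
  shows "deriv (Gn n) x = (\<Sum>k<n. sk k x)"
proof -
  have "((\<lambda>z. \<Sum>k<n. pk k z) has_field_derivative (\<Sum>k<n. sk k x)) (at x)"
    by (intro DERIV_sum pk_deriv nondyadic assms)
  moreover have "Gn n = (\<lambda>z. \<Sum>k<n. pk k z)" using Gn_pk by auto
  ultimately show ?thesis by (simp add: DERIV_imp_deriv)
qed

lemma takagi_pk: "takagi z = (\<Sum>k. pk k z)"
  unfolding takagi_def pk_def phi_psi ..

lemma psi_bounds: "0 \<le> psi t" "psi t \<le> 1"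
  unfolding psi_def by linarith+

lemma summable_pk: "summable (\<lambda>k. pk k z)"
proof (rule summable_comparison_test[of _ "\<lambda>k. (1/2)^k"])
  show "\<exists>N. \<forall>n\<ge>N. norm (pk n z) \<le> (1/2)^n"
    using psi_bounds by (auto simp: pk_def power_divide divide_right_mono)
qed simp


lemma floor_double:
  "\<lfloor>2 * t\<rfloor> = (if 2 * t < 2 * of_int \<lfloor>t\<rfloor> + 1 then 2 * \<lfloor>t\<rfloor> else 2 * \<lfloor>t\<rfloor> + 1)"
  by (subst floor_eq_iff) (auto, linarith+)

lemma reflection:
  fixes N :: nat and x :: real
  assumes nd: "\<And>m. 2^m * x \<notin> \<int>"
  defines "F \<equiv> \<lfloor>2^N * x\<rfloor>"
  defines "y \<equiv> (2 * of_int F + 1) / 2^N - x"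
  shows "sk N x = -1 \<Longrightarrow> y < x"
    and "sk N x = 1 \<Longrightarrow> x < y"
    and "\<bar>y - x\<bar> < 1 / 2^N"
    and "takagi y - takagi x = (\<Sum>k<N. sk k x) * (y - x)"
proof -
  define t where "t = 2^N * x"
  have tF1: "of_int F < t" using nd[of N] unfolding F_def t_def
    by (metis Ints_of_int floor_correct order_le_less)
  have tF2: "t < of_int F + 1" unfolding F_def t_def by linarith
  have t2: "2 * t \<noteq> 2 * of_int F + 1"
  proof
    assume "2 * t = 2 * of_int F + 1"
    then have "2^(Suc N) * x = of_int (2 * F + 1)" unfolding t_def by simp
    then have "2^(Suc N) * x \<in> \<int>" by (metis Ints_of_int)
    then show False using nd by blast
  qed
  have yx: "y - x = (2 * of_int F + 1 - 2 * t) / 2^N"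
    unfolding y_def t_def by (simp add: field_simps)
  have fl: "\<lfloor>2^(Suc N) * x\<rfloor> = (if 2 * t < 2 * of_int F + 1 then 2 * F else 2 * F + 1)"
    using floor_double[of t] unfolding t_def F_def by (simp add: mult.assoc)
  show "y < x" if "sk N x = -1"
  proof -
    have "\<not> 2 * t < 2 * of_int F + 1"
      using that fl unfolding sk_def sgn_par_def by (auto split: if_splits)
    then have "2 * of_int F + 1 - 2 * t < 0" using t2 by simp
    then show ?thesis using yx by (smt (verit) divide_neg_pos zero_less_power)
  qed
  show "x < y" if "sk N x = 1"
  proof -
    have "2 * t < 2 * of_int F + 1"
      using that fl unfolding sk_def sgn_par_def by (auto split: if_splits)
    then have "2 * of_int F + 1 - 2 * t > 0" by simp
    then show ?thesis using yx by (smt (verit) divide_pos_pos zero_less_power)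
  qed
  have "\<bar>2 * of_int F + 1 - 2 * t\<bar> < 1" using tF1 tF2 by linarith
  then show "\<bar>y - x\<bar> < 1 / 2^N" unfolding yx by (simp add: divide_strict_right_mono)
  have high: "pk k y - pk k x = 0" if "N \<le> k" for k
  proof -
    have "2^k * y = (2 * of_int F + 1) * 2^(k - N) - 2^k * x"
      unfolding y_def using that by (simp add: field_simps power_diff)
    moreover have "(2 * of_int F + 1) * (2::real)^(k - N) \<in> \<int>" by simp
    ultimately show ?thesis unfolding pk_def by (simp add: psi_refl)
  qed
  have low: "pk k y - pk k x = sk k x * (y - x)" if "k < N" for k
  proof -
    define q :: int where "q = 2^(N - Suc k)"
    have q: "q > 0" unfolding q_def by simp
    define J where "J = F div q"
    have qr: "real_of_int q = 2^(N - Suc k)" unfolding q_def by simp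
    have NN: "(2::real)^N = 2^(N - Suc k) * 2^(Suc k)"
      using that by (metis le_add_diff_inverse2 less_eq_Suc_le power_add)
    have sc: "2^(Suc k) * z = 2^N * z / of_int q" for z :: real
      unfolding qr NN by simp
    have JF: "\<lfloor>2^(Suc k) * x\<rfloor> = J"
      unfolding sc J_def F_def using q by (subst floor_divide_real_eq_div) simp_all
    have a: "J * q \<le> F" unfolding J_def
      using q div_mult_mod_eq[of F q] pos_mod_sign[of q F] by linarith
    have b: "F + 1 \<le> (J + 1) * q" unfolding J_def using q
      by (smt (verit, ccfv_SIG) distrib_right minus_mod_eq_div_mult mult_cancel_right1 pos_mod_bound)
    have bnd: "of_int J \<le> u / of_int q \<and> u / of_int q \<le> of_int J + 1"
      if "of_int F \<le> u" "u \<le> of_int F + 1" for u :: real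
    proof -
      have "real_of_int J * of_int q \<le> u" using a that by (metis of_int_le_iff of_int_mult order_trans)
      moreover have "u \<le> (of_int J + 1) * of_int q" using b that
        by (metis of_int_1 of_int_add of_int_le_iff of_int_mult order_trans)
      ultimately show ?thesis using q by (simp add: field_simps)
    qed
    have "2^N * y = 2 * of_int F + 1 - t" unfolding y_def t_def by (simp add: field_simps)
    then have by1: "of_int J \<le> 2^(Suc k) * y \<and> 2^(Suc k) * y \<le> of_int J + 1"
      unfolding sc using bnd[of "2 * of_int F + 1 - t"] tF1 tF2 by simp
    have bx1: "of_int J \<le> 2^(Suc k) * x \<and> 2^(Suc k) * x \<le> of_int J + 1"
      unfolding sc using bnd[of t] tF1 tF2 unfolding t_def by simp
    have "pk k y - pk k x = sgn_par J * (y - x)"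
      using by1 bx1 by (intro pk_affine) auto
    then show ?thesis unfolding sk_def JF .
  qed
  have "takagi y - takagi x = (\<Sum>k. pk k y - pk k x)"
    unfolding takagi_pk by (simp add: suminf_diff summable_pk)
  also have "\<dots> = (\<Sum>k<N. pk k y - pk k x)"
    by (rule suminf_finite) (use high in auto)
  also have "\<dots> = (\<Sum>k<N. sk k x) * (y - x)"
    by (simp add: low sum_distrib_right)
  finally show "takagi y - takagi x = (\<Sum>k<N. sk k x) * (y - x)" .
qed


lemma sk_cases: "sk k x = 1 \<or> sk k x = -1"
  unfolding sk_def sgn_par_def by auto

lemma frac_step:
  fixes x :: real
  defines "f \<equiv> \<lambda>M. 2^M * x - of_int \<lfloor>2^M * x\<rfloor>"
  shows "f (Suc M) = (if sk M x = 1 then 2 * f M else 2 * f M - 1)"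
proof -
  define t where "t = 2^M * x"
  have fl: "\<lfloor>2^(Suc M) * x\<rfloor> = (if 2 * t < 2 * of_int \<lfloor>t\<rfloor> + 1 then 2 * \<lfloor>t\<rfloor> else 2 * \<lfloor>t\<rfloor> + 1)"
    using floor_double[of t] unfolding t_def by (simp add: mult.assoc)
  have e: "2^(Suc M) * x = 2 * t" unfolding t_def by simp
  show ?thesis
  proof (cases "2 * t < 2 * of_int \<lfloor>t\<rfloor> + 1")
    case True
    then have "\<lfloor>2^(Suc M) * x\<rfloor> = 2 * \<lfloor>t\<rfloor>" using fl by simp
    then show ?thesis unfolding f_def sk_def sgn_par_def e t_def[symmetric] by simp
  next
    case False
    then have "\<lfloor>2^(Suc M) * x\<rfloor> = 2 * \<lfloor>t\<rfloor> + 1" using fl by simp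
    then show ?thesis unfolding f_def sk_def sgn_par_def e t_def[symmetric] by simp
  qed
qed

lemma inf_often:
  fixes x :: real
  assumes nd: "\<And>m. 2^m * x \<notin> \<int>" and c: "c = 1 \<or> c = -1"
  shows "\<exists>M\<ge>n0. sk M x = c"
proof (rule ccontr)
  assume "\<not> ?thesis"
  then have all: "\<And>M. M \<ge> n0 \<Longrightarrow> sk M x = -c" using sk_cases c by (metis equation_minus_iff)
  define f where "f = (\<lambda>M. 2^M * x - of_int \<lfloor>2^M * x\<rfloor>)"
  have fpos: "0 < f M" "f M < 1" for M
  proof -
    have "of_int \<lfloor>2^M * x\<rfloor> < 2^M * x" using nd[of M]
      by (metis Ints_of_int floor_correct order_le_less)
    then show "0 < f M" "f M < 1" unfolding f_def by linarith+
  qed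
  have st: "f (Suc M) = (if sk M x = 1 then 2 * f M else 2 * f M - 1)" for M
    unfolding f_def by (rule frac_step)
  show False
  proof (cases "c = 1")
    case True
    then have "\<And>M. M \<ge> n0 \<Longrightarrow> f (Suc M) = 2 * f M - 1" using all st by simp
    then have "1 - f (n0 + j) = 2^j * (1 - f n0)" for j
    proof (induction j)
      case (Suc j)
      have IH: "1 - f (n0 + j) = 2^j * (1 - f n0)" using Suc by blast
      have "f (n0 + Suc j) = 2 * f (n0 + j) - 1" using Suc.prems[of "n0+j"] by simp
      then have "1 - f (n0 + Suc j) = 2 * (1 - f (n0 + j))" by simp
      then show ?case using IH by simp
    qed simp
    moreover obtain j where "1 / (1 - f n0) < 2^j" using real_arch_pow[of 2] by fastforce
    ultimately have "1 < 1 - f (n0 + j)" using fpos(2)[of n0] by (simp add: field_simps)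
    then show False using fpos(1)[of "n0+j"] by simp
  next
    case False
    then have "c = -1" using c by simp
    then have "\<And>M. M \<ge> n0 \<Longrightarrow> f (Suc M) = 2 * f M" using all st by simp
    then have "f (n0 + j) = 2^j * f n0" for j
    proof (induction j)
      case (Suc j)
      have IH: "f (n0 + j) = 2^j * f n0" using Suc by blast
      have "f (n0 + Suc j) = 2 * f (n0 + j)" using Suc.prems[of "n0+j"] by simp
      then show ?case using IH by simp
    qed simp
    moreover obtain j where "1 / f n0 < 2^j" using real_arch_pow[of 2] by fastforce
    ultimately have "1 < f (n0 + j)" using fpos(1)[of n0] by (simp add: field_simps)
    then show False using fpos(2)[of "n0+j"] by simp
  qed
qed

lemma sum_const_run:
  assumes "a \<le> b" "\<And>k. a \<le> k \<Longrightarrow> k < b \<Longrightarrow> sk k x = c"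
  shows "(\<Sum>k<b. sk k x) = (\<Sum>k<a. sk k x) + c * (real b - real a)"
  using assms
proof (induction b rule: dec_induct)
  case base then show ?case by simp
next
  case (step n)
  then show ?case by (simp add: algebra_simps)
qed

lemma Liminf_le_compose:
  fixes f :: "'a \<Rightarrow> 'c :: complete_linorder"
  assumes "filterlim r F G"
  shows "Liminf F f \<le> Liminf G (\<lambda>n. f (r n))"
proof -
  have "\<forall>y<Liminf F f. eventually (\<lambda>x. y < f x) F" using le_Liminf_iff by blast
  then have "\<forall>y<Liminf F f. eventually (\<lambda>n. y < f (r n)) G"
    using assms filterlim_iff by fastforce
  then show ?thesis using le_Liminf_iff by blast
qed

lemma Limsup_ge_compose:
  fixes f :: "'a \<Rightarrow> 'c :: complete_linorder"
  assumes "filterlim r F G"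
  shows "Limsup G (\<lambda>n. f (r n)) \<le> Limsup F f"
proof -
  have "\<forall>y>Limsup F f. eventually (\<lambda>x. y > f x) F" using Limsup_le_iff by blast
  then have "\<forall>y>Limsup F f. eventually (\<lambda>n. y > f (r n)) G"
    using assms filterlim_iff by fastforce
  then show ?thesis using Limsup_le_iff by blast
qed


lemma select:
  fixes x :: real
  assumes inf: "\<And>n0. \<exists>M\<ge>n0. sk M x = c" and c: "c = 1 \<or> c = -1"
  obtains P where "filterlim P at_top sequentially"
    and "eventually (\<lambda>n. P n < n \<and> sk (P n) x = c \<and>
           (\<Sum>k<n. sk k x) = (\<Sum>k<P n. sk k x) + c - c * (real n - real (P n) - 1)) sequentially"
proof -
  obtain m0 where m0: "sk m0 x = c" using inf by blast
  define P where "P n = Max {M. M < n \<and> sk M x = c}" for n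
  have fin: "finite {M. M < n \<and> sk M x = c}" for n by simp
  have PP: "P n < n \<and> sk (P n) x = c" if "m0 < n" for n
  proof -
    have "{M. M < n \<and> sk M x = c} \<noteq> {}" using that m0 by blast
    from Max_in[OF fin this] show ?thesis unfolding P_def by blast
  qed
  have Pge: "M \<le> P n" if "M < n" "sk M x = c" for M n
    unfolding P_def using that by (intro Max_ge[OF fin]) simp
  have lim: "filterlim P at_top sequentially"
    unfolding filterlim_at_top
  proof
    fix Z
    obtain M where M: "M \<ge> Z" "sk M x = c" using inf by blast
    show "eventually (\<lambda>n. Z \<le> P n) sequentially"
      using eventually_gt_at_top[of M] by eventually_elim (use Pge M in force)
  qed
  have "eventually (\<lambda>n. P n < n \<and> sk (P n) x = c \<and>
           (\<Sum>k<n. sk k x) = (\<Sum>k<P n. sk k x) + c - c * (real n - real (P n) - 1)) sequentially"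
    using eventually_gt_at_top[of m0]
  proof eventually_elim
    case (elim n)
    note pn = PP[OF elim]
    have run: "sk k x = - c" if "Suc (P n) \<le> k" "k < n" for k
    proof -
      have "sk k x \<noteq> c" using Pge[of k n] that by fastforce
      then show ?thesis using sk_cases[of k x] c by auto
    qed
    have "(\<Sum>k<n. sk k x) = (\<Sum>k<Suc (P n). sk k x) + (- c) * (real n - real (Suc (P n)))"
      using pn run by (intro sum_const_run) auto
    also have "(\<Sum>k<Suc (P n). sk k x) = (\<Sum>k<P n. sk k x) + c" using pn by simp
    finally show ?case using pn by (simp add: algebra_simps)
  qed
  then show ?thesis using that lim by blast
qed

theorem proposition2p1:
  fixes x :: real
  assumes "x \<notin> dyadics"
  shows "dini_lower_left takagi x \<le> liminf (\<lambda>n. ereal (deriv (Gn n) x)) + 1 \<and>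
         dini_upper_right takagi x \<ge> limsup (\<lambda>n. ereal (deriv (Gn n) x)) - 1"
proof -
  have nd: "\<And>m. 2^m * x \<notin> \<int>" using nondyadic[OF assms] .
  define E where "E n = (\<Sum>k<n. sk k x)" for n
  have dE: "deriv (Gn n) x = E n" for n unfolding E_def by (rule deriv_Gn[OF assms])
  define h where "h N = ((2 * of_int \<lfloor>2^N * x\<rfloor> + 1) / 2^N - x) - x" for N
  define Q where "Q t = ereal ((takagi (x + t) - takagi x) / t)" for t
  note R = reflection[OF nd]
  have hneg: "sk N x = -1 \<Longrightarrow> h N < 0" for N using R(1)[of N] unfolding h_def by simp
  have hpos: "sk N x = 1 \<Longrightarrow> h N > 0" for N using R(2)[of N] unfolding h_def by simp
  have habs: "\<bar>h N\<bar> < 1 / 2^N" for N using R(3)[of N] unfolding h_def by simp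
  have hnz: "h N \<noteq> 0" for N using hneg hpos sk_cases by (metis less_irrefl)
  have Qh: "Q (h N) = ereal (E N)" for N
  proof -
    have "takagi (x + h N) - takagi x = E N * h N"
      using R(4)[of N] unfolding h_def E_def by simp
    then show ?thesis unfolding Q_def using hnz[of N] by simp
  qed
  have tend: "((\<lambda>n. h (P n)) \<longlongrightarrow> 0) sequentially" if "filterlim P at_top sequentially" for P
  proof (rule Lim_null_comparison)
    show "eventually (\<lambda>n. norm (h (P n)) \<le> (1/2) ^ (P n)) sequentially"
      using habs by (simp add: less_imp_le power_one_over)
    have "((\<lambda>n. (1/2::real) ^ n) \<longlongrightarrow> 0) sequentially" by (rule LIMSEQ_power_zero) simp
    then show "((\<lambda>n. (1/2::real) ^ (P n)) \<longlongrightarrow> 0) sequentially"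
      using filterlim_compose that by blast
  qed
  have part1: "dini_lower_left takagi x \<le> liminf (\<lambda>n. ereal (E n)) + 1"
  proof -
    obtain P where P: "filterlim P at_top sequentially"
      and ev: "eventually (\<lambda>n. P n < n \<and> sk (P n) x = -1 \<and>
           E n = E (P n) + -1 - -1 * (real n - real (P n) - 1)) sequentially"
      using select[of x "-1"] inf_often[OF nd] unfolding E_def by auto
    have fl: "filterlim (\<lambda>n. h (P n)) (at_left 0) sequentially"
      unfolding filterlim_at using tend[OF P] ev
      by (auto elim!: eventually_mono dest: hneg)
    have "dini_lower_left takagi x = Liminf (at_left 0) Q"
      unfolding dini_lower_left_def Q_def by simp
    also have "\<dots> \<le> Liminf sequentially (\<lambda>n. Q (h (P n)))"
      by (rule Liminf_le_compose[OF fl])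
    also have "\<dots> \<le> Liminf sequentially (\<lambda>n. ereal (E n) + 1)"
    proof (rule Liminf_mono)
      show "eventually (\<lambda>n. Q (h (P n)) \<le> ereal (E n) + 1) sequentially"
        using ev
      proof eventually_elim
        case (elim n)
        then have "E (P n) \<le> E n + 1" by simp
        then show ?case unfolding Qh by simp
      qed
    qed
    also have "\<dots> = liminf (\<lambda>n. ereal (E n)) + 1"
      by (rule Liminf_add_ereal_right) simp_all
    finally show ?thesis .
  qed
  have part2: "limsup (\<lambda>n. ereal (E n)) - 1 \<le> dini_upper_right takagi x"
  proof -
    obtain P where P: "filterlim P at_top sequentially"
      and ev: "eventually (\<lambda>n. P n < n \<and> sk (P n) x = 1 \<and>
           E n = E (P n) + 1 - 1 * (real n - real (P n) - 1)) sequentially"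
      using select[of x 1] inf_often[OF nd] unfolding E_def by auto
    have fl: "filterlim (\<lambda>n. h (P n)) (at_right 0) sequentially"
      unfolding filterlim_at using tend[OF P] ev
      by (auto elim!: eventually_mono dest: hpos)
    have "limsup (\<lambda>n. ereal (E n)) - 1 = Limsup sequentially (\<lambda>n. ereal (E n) + (-1))"
      by (subst Limsup_add_ereal_right) (simp_all add: minus_ereal_def)
    also have "\<dots> \<le> Limsup sequentially (\<lambda>n. Q (h (P n)))"
    proof (rule Limsup_mono)
      show "eventually (\<lambda>n. ereal (E n) + (-1) \<le> Q (h (P n))) sequentially"
        using ev
      proof eventually_elim
        case (elim n)
        then have "E n - 1 \<le> E (P n)" by simp
        then show ?case unfolding Qh by (simp add: one_ereal_def)
      qed
    qed
    also have "\<dots> \<le> Limsup (at_right 0) Q"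
      by (rule Limsup_ge_compose[OF fl])
    also have "\<dots> = dini_upper_right takagi x"
      unfolding dini_upper_right_def Q_def by simp
    finally show ?thesis .
  qed
  show ?thesis using part1 part2 unfolding dE by simp
qed

end
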